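(* Let $\{X_k(m): m\in\mathbb{R}_+,\ k\in\mathbb{N}\}$ be a family of integrable real random variables on a probability space $(\Omega,\mathcal F,\mathbb P)$ that are independent in $k$. Assume: (C) $\mathbb{E}[X_k(m)]=0$ for all $m\in\mathbb{R}_+$, $k\in\mathbb{N}$; (W1) for every $\varepsilon>0$, $\lim_{m\to\infty}\sup_k \mathbb{P}(|X_k(m)|>\varepsilon)=0$; (W2) $\lim_{A\to\infty}\sup_{k,m}\mathbb{E}\big[|X_k(m)|\mathbf 1_{\{|X_k(m)|>A\}}\big]=0$. Then for every sequence $\mathbf m=(m_k)_{k\in\mathbb N}$ of positive reals with $\sum_{k}m_k=\infty$, setting $M_n=\sum_{k=1}^n m_k$ and $S_n=\sum_{k=1}^n \frac{m_k}{M_n}X_k(m_k)$, we have $\lim_{n\to\infty}\mathbb{P}(|S_n|>\varepsilon)=0$ for every $\varepsilon>0$.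
   Context: $\mathbb{R}_+$ denotes the positive reals. "Independent in $k$" means that the families $\{X_k(m): m\in\mathbb{R}_+\}$ for different $k$ are independent. *)

theory Defs
  imports "HOL-Probability.Probability"
begin

end

theory Submission
  imports Defs
begin

lemma (in prob_space) sq_sum_indep:
  fixes T :: "nat \<Rightarrow> 'a \<Rightarrow> real"
  assumes fin: "finite I" and ind: "indep_vars (\<lambda>_. borel) T I"
    and bnd: "\<And>i \<omega>. i \<in> I \<Longrightarrow> \<bar>T i \<omega>\<bar> \<le> C"
    and mean: "\<And>i. i \<in> I \<Longrightarrow> expectation (T i) = 0"
  shows "expectation (\<lambda>\<omega>. (\<Sum>i\<in>I. c i * T i \<omega>)^2)
     = (\<Sum>i\<in>I. (c i)^2 * expectation (\<lambda>\<omega>. (T i \<omega>)^2))"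
proof -
  have meas[measurable]: "T i \<in> borel_measurable M" if "i \<in> I" for i
    using ind that unfolding indep_vars_def by auto
  have intT: "integrable M (T i)" if "i \<in> I" for i
    by (rule integrable_const_bound[where B=C]) (use bnd that in auto)
  have intTT: "integrable M (\<lambda>\<omega>. T i \<omega> * T j \<omega>)" if "i \<in> I" "j \<in> I" for i j
  proof (rule integrable_const_bound[where B="C*C"])
    show "AE x in M. norm (T i x * T j x) \<le> C * C"
    proof (rule AE_I2)
      fix x show "norm (T i x * T j x) \<le> C * C"
        using bnd[OF that(1), of x] bnd[OF that(2), of x] by (simp add: abs_mult mult_mono)
    qed
  qed (use that in auto)
  have cross: "expectation (\<lambda>\<omega>. T i \<omega> * T j \<omega>) = (if i = j then expectation (\<lambda>\<omega>. (T i \<omega>)^2) else 0)"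
    if "i \<in> I" "j \<in> I" for i j
  proof (cases "i = j")
    case True then show ?thesis by (simp add: power2_eq_square)
  next
    case False
    have ij: "indep_vars (\<lambda>_. borel) T {i, j}"
      by (rule indep_vars_subset[OF ind]) (use that in auto)
    have "expectation (\<lambda>\<omega>. \<Prod>k\<in>{i,j}. T k \<omega>) = (\<Prod>k\<in>{i,j}. expectation (T k))"
      by (rule indep_vars_lebesgue_integral[OF _ ij]) (use that intT in auto)
    then show ?thesis using False mean that by simp
  qed
  have "(\<lambda>\<omega>. (\<Sum>i\<in>I. c i * T i \<omega>)^2) = (\<lambda>\<omega>. \<Sum>i\<in>I. \<Sum>j\<in>I. c i * c j * (T i \<omega> * T j \<omega>))"
    by (auto simp: power2_eq_square sum_product intro!: sum.cong)
  then have "expectation (\<lambda>\<omega>. (\<Sum>i\<in>I. c i * T i \<omega>)^2)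
      = (\<Sum>i\<in>I. \<Sum>j\<in>I. c i * c j * expectation (\<lambda>\<omega>. T i \<omega> * T j \<omega>))"
    using intTT by (simp add: integral_sum integrable_sum)
  also have "\<dots> = (\<Sum>i\<in>I. \<Sum>j\<in>I. if i = j then c i * c j * expectation (\<lambda>\<omega>. (T i \<omega>)^2) else 0)"
    by (intro sum.cong refl) (simp add: cross)
  also have "\<dots> = (\<Sum>i\<in>I. (c i)^2 * expectation (\<lambda>\<omega>. (T i \<omega>)^2))"
    using fin by (simp add: power2_eq_square)
  finally show ?thesis .
qed

lemma (in prob_space) trunc_var_bound:
  fixes Z :: "'a \<Rightarrow> real"
  assumes Zm[measurable]: "Z \<in> borel_measurable M" and A: "A > 0" and d: "\<delta> > 0"
  defines "B \<equiv> \<lambda>\<omega>. if A < \<bar>Z \<omega>\<bar> then 0 else Z \<omega>"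
  shows "expectation (\<lambda>\<omega>. (B \<omega> - expectation B)^2)
          \<le> \<delta>^2 + A^2 * prob {\<omega>\<in>space M. \<delta> < \<bar>Z \<omega>\<bar>}"
proof -
  have Bm[measurable]: "B \<in> borel_measurable M" unfolding B_def by measurable
  have bB: "\<bar>B \<omega>\<bar> \<le> A" for \<omega> unfolding B_def using A by auto
  have intB: "integrable M B"
    by (rule integrable_const_bound[where B=A]) (use bB in auto)
  have intB2: "integrable M (\<lambda>\<omega>. (B \<omega>)^2)"
    by (rule integrable_const_bound[where B="A^2"]) (use bB A in \<open>auto intro!: AE_I2 simp: abs_le_square_iff[symmetric]\<close>)
  let ?S = "{\<omega>\<in>space M. \<delta> < \<bar>Z \<omega>\<bar>}"
  have S[measurable]: "?S \<in> sets M" by measurable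
  define mu where "mu = expectation B"
  have "(\<lambda>\<omega>. (B \<omega> - mu)^2) = (\<lambda>\<omega>. (B \<omega>)^2 + (- 2 * mu) * B \<omega> + mu^2)"
    by (auto simp: power2_eq_square algebra_simps)
  then have "expectation (\<lambda>\<omega>. (B \<omega> - mu)^2) = expectation (\<lambda>\<omega>. (B \<omega>)^2) - mu^2"
    using intB intB2 by (simp add: mu_def power2_eq_square prob_space)
  also have "\<dots> \<le> expectation (\<lambda>\<omega>. (B \<omega>)^2)" by simp
  also have "\<dots> \<le> expectation (\<lambda>\<omega>. \<delta>^2 + A^2 * indicator ?S \<omega>)"
  proof (rule integral_mono[OF intB2])
    show "integrable M (\<lambda>\<omega>. \<delta>^2 + A^2 * indicator ?S \<omega>)"
    proof -
      have "integrable M (indicator ?S :: _ \<Rightarrow> real)"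
        using S by (intro integrable_real_indicator) (auto simp: emeasure_eq_measure)
      then show ?thesis by auto
    qed
    fix \<omega> assume w: "\<omega> \<in> space M"
    show "(B \<omega>)^2 \<le> \<delta>^2 + A^2 * indicator ?S \<omega>"
    proof (cases "A < \<bar>Z \<omega>\<bar>")
      case True then show ?thesis by (simp add: B_def)
    next
      case False
      show ?thesis
      proof (cases "\<delta> < \<bar>Z \<omega>\<bar>")
        case True
        then have "(Z \<omega>)^2 \<le> A^2" using False A by (metis abs_le_square_iff abs_of_pos not_less)
        moreover have "0 \<le> \<delta>^2" by simp
        moreover have "B \<omega> = Z \<omega>" "indicator ?S \<omega> = (1::real)" using True False w by (auto simp: B_def)
        ultimately show ?thesis by (simp add: add_increasing)
      next
        case F2: False
        then have "(Z \<omega>)^2 \<le> \<delta>^2" using d by (metis abs_le_square_iff abs_of_pos not_less)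
        then show ?thesis using F2 False w by (simp add: B_def)
      qed
    qed
  qed
  also have "\<dots> = \<delta>^2 + A^2 * prob ?S"
    using S by (simp add: prob_space emeasure_eq_measure)
  finally show ?thesis by (simp add: mu_def)
qed

lemma (in prob_space) trunc_tail_bound:
  fixes Z :: "'a \<Rightarrow> real" and A :: real
  assumes Zi: "integrable M Z" and E0: "expectation Z = 0"
  defines "B \<equiv> \<lambda>\<omega>. if A < \<bar>Z \<omega>\<bar> then 0 else Z \<omega>"
  shows "integrable M (\<lambda>\<omega>. \<bar>Z \<omega> - B \<omega> + expectation B\<bar>)"
    and "integrable M (\<lambda>\<omega>. \<bar>Z \<omega>\<bar> * indicator {\<omega>. A < \<bar>Z \<omega>\<bar>} \<omega>)"
    and "expectation (\<lambda>\<omega>. \<bar>Z \<omega> - B \<omega> + expectation B\<bar>)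
          \<le> 2 * expectation (\<lambda>\<omega>. \<bar>Z \<omega>\<bar> * indicator {\<omega>. A < \<bar>Z \<omega>\<bar>} \<omega>)"
proof -
  have Zm[measurable]: "Z \<in> borel_measurable M" using Zi by auto
  define U where "U = (\<lambda>\<omega>. if A < \<bar>Z \<omega>\<bar> then Z \<omega> else 0)"
  have Um[measurable]: "U \<in> borel_measurable M" unfolding U_def by measurable
  have intU: "integrable M U"
    by (rule Bochner_Integration.integrable_bound[OF Zi]) (auto simp: U_def)
  have BZU: "B = (\<lambda>\<omega>. Z \<omega> - U \<omega>)" by (auto simp: B_def U_def)
  have intB: "integrable M B" unfolding BZU using Zi intU by auto
  have EB: "expectation B = - expectation U" unfolding BZU using Zi intU E0 by simp
  have absU: "(\<lambda>\<omega>. \<bar>Z \<omega>\<bar> * indicator {\<omega>. A < \<bar>Z \<omega>\<bar>} \<omega>) = (\<lambda>\<omega>. \<bar>U \<omega>\<bar>)"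
    by (auto simp: U_def indicator_def)
  have eqV: "(\<lambda>\<omega>. \<bar>Z \<omega> - B \<omega> + expectation B\<bar>) = (\<lambda>\<omega>. \<bar>U \<omega> - expectation U\<bar>)"
  proof -
    have "\<And>\<omega>. Z \<omega> - B \<omega> = U \<omega>" by (simp add: BZU)
    then show ?thesis by (simp add: EB)
  qed
  show "integrable M (\<lambda>\<omega>. \<bar>Z \<omega> - B \<omega> + expectation B\<bar>)" unfolding eqV using intU by auto
  show "integrable M (\<lambda>\<omega>. \<bar>Z \<omega>\<bar> * indicator {\<omega>. A < \<bar>Z \<omega>\<bar>} \<omega>)" unfolding absU using intU by auto
  have "expectation (\<lambda>\<omega>. \<bar>U \<omega> - expectation U\<bar>) \<le> expectation (\<lambda>\<omega>. \<bar>U \<omega>\<bar> + \<bar>expectation U\<bar>)"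
    by (rule integral_mono) (use intU in auto)
  also have "\<dots> = expectation (\<lambda>\<omega>. \<bar>U \<omega>\<bar>) + \<bar>expectation U\<bar>"
    using intU by (simp add: prob_space)
  also have "\<dots> \<le> 2 * expectation (\<lambda>\<omega>. \<bar>U \<omega>\<bar>)"
    using integral_abs_bound[of M U] by simp
  finally show "expectation (\<lambda>\<omega>. \<bar>Z \<omega> - B \<omega> + expectation B\<bar>)
          \<le> 2 * expectation (\<lambda>\<omega>. \<bar>Z \<omega>\<bar> * indicator {\<omega>. A < \<bar>Z \<omega>\<bar>} \<omega>)"
    unfolding eqV absU .
qed

theorem theorem2p1:
  fixes M :: "'a measure"
    and X :: "nat \<Rightarrow> real \<Rightarrow> 'a \<Rightarrow> real"
    and m :: "nat \<Rightarrow> real"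
  assumes P: "prob_space M"
    and integ: "\<And>k r. k \<ge> 1 \<Longrightarrow> r > 0 \<Longrightarrow> integrable M (X k r)"
    and indep: "prob_space.indep_vars M (\<lambda>_. PiM {0<..} (\<lambda>_. borel))
                  (\<lambda>k \<omega>. \<lambda>r\<in>{0<..}. X k r \<omega>) {1..}"
    and C: "\<And>k r. k \<ge> 1 \<Longrightarrow> r > 0 \<Longrightarrow> prob_space.expectation M (X k r) = 0"
    and W1: "\<And>\<epsilon>. \<epsilon> > 0 \<Longrightarrow>
              ((\<lambda>r. SUP k\<in>{1..}. measure M {\<omega> \<in> space M. \<bar>X k r \<omega>\<bar> > \<epsilon>}) \<longlongrightarrow> 0) at_top"
    and W2: "((\<lambda>A. SUP (k, r)\<in>{1..} \<times> {0<..}.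
               \<integral>\<^sup>+ \<omega>. ennreal (\<bar>X k r \<omega>\<bar> * indicator {\<omega>. \<bar>X k r \<omega>\<bar> > A} \<omega>) \<partial>M)
              \<longlongrightarrow> 0) at_top"
    and mpos: "\<And>k. k \<ge> 1 \<Longrightarrow> m k > 0"
    and mdiv: "filterlim (\<lambda>n. \<Sum>k=1..n. m k) at_top sequentially"
  shows "\<And>\<epsilon>. \<epsilon> > 0 \<Longrightarrow>
    ((\<lambda>n. measure M {\<omega> \<in> space M.
        \<bar>\<Sum>k=1..n. m k / (\<Sum>j=1..n. m j) * X k (m k) \<omega>\<bar> > \<epsilon>}) \<longlongrightarrow> 0) sequentially"
proof -
  interpret prob_space M by (rule P)
  fix \<epsilon> :: real assume eps: "\<epsilon> > 0"
  define Mn where "Mn n = (\<Sum>j=1..n. m j)" for n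
  define Z where "Z k = (if 1 \<le> k then X k (m k) else (\<lambda>_. 0))" for k
  have Zi: "integrable M (Z k)" for k using integ mpos by (simp add: Z_def)
  have Zm[measurable]: "Z k \<in> borel_measurable M" for k using Zi[of k] by auto
  have EZ: "expectation (Z k) = 0" for k using C mpos by (simp add: Z_def)
  define Pn where "Pn n = measure M {\<omega> \<in> space M.
        \<bar>\<Sum>k=1..n. m k / (\<Sum>j=1..n. m j) * X k (m k) \<omega>\<bar> > \<epsilon>}" for n
  have Pn_eq: "Pn n = measure M {\<omega> \<in> space M. \<bar>\<Sum>k=1..n. m k / Mn n * Z k \<omega>\<bar> > \<epsilon>}" for n
  proof -
    have "(\<Sum>k=1..n. m k / Mn n * Z k \<omega>) = (\<Sum>k=1..n. m k / (\<Sum>j=1..n. m j) * X k (m k) \<omega>)" for \<omega>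
      by (intro sum.cong) (auto simp: Z_def Mn_def)
    then show ?thesis by (simp add: Pn_def)
  qed
  have "\<forall>\<^sub>F n in sequentially. Pn n < \<eta>" if eta: "\<eta> > 0" for \<eta>
  proof -
    define c where "c = \<eta> * \<epsilon> / 16"
    have c: "c > 0" using eta eps by (simp add: c_def)
    have "\<forall>\<^sub>F A in at_top. (SUP (k, r)\<in>{1..} \<times> {0<..}.
               \<integral>\<^sup>+ \<omega>. ennreal (\<bar>X k r \<omega>\<bar> * indicator {\<omega>. \<bar>X k r \<omega>\<bar> > A} \<omega>) \<partial>M) < ennreal c"
      using order_tendstoD(2)[OF W2] c by simp
    then obtain A0 where A0: "\<And>A. A \<ge> A0 \<Longrightarrow> (SUP (k, r)\<in>{1..} \<times> {0<..}.
               \<integral>\<^sup>+ \<omega>. ennreal (\<bar>X k r \<omega>\<bar> * indicator {\<omega>. \<bar>X k r \<omega>\<bar> > A} \<omega>) \<partial>M) < ennreal c"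
      unfolding eventually_at_top_linorder by blast
    define A where "A = max A0 1"
    have A: "A > 0" by (simp add: A_def)
    have tailA: "expectation (\<lambda>\<omega>. \<bar>Z k \<omega>\<bar> * indicator {\<omega>. A < \<bar>Z k \<omega>\<bar>} \<omega>) < c" for k
    proof (cases "1 \<le> k")
      case False then show ?thesis using c by (simp add: Z_def)
    next
      case True
      have int: "integrable M (\<lambda>\<omega>. \<bar>Z k \<omega>\<bar> * indicator {\<omega>. A < \<bar>Z k \<omega>\<bar>} \<omega>)"
        using trunc_tail_bound(2)[OF Zi EZ] .
      have "ennreal (expectation (\<lambda>\<omega>. \<bar>Z k \<omega>\<bar> * indicator {\<omega>. A < \<bar>Z k \<omega>\<bar>} \<omega>))
          = (\<integral>\<^sup>+ \<omega>. ennreal (\<bar>Z k \<omega>\<bar> * indicator {\<omega>. A < \<bar>Z k \<omega>\<bar>} \<omega>) \<partial>M)"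
        by (rule nn_integral_eq_integral[symmetric]) (use int in auto)
      also have "\<dots> \<le> (SUP (k, r)\<in>{1..} \<times> {0<..}.
               \<integral>\<^sup>+ \<omega>. ennreal (\<bar>X k r \<omega>\<bar> * indicator {\<omega>. \<bar>X k r \<omega>\<bar> > A} \<omega>) \<partial>M)"
        using SUP_upper[of "(k, m k)" "{1..} \<times> {0<..}"
            "\<lambda>(k, r). \<integral>\<^sup>+ \<omega>. ennreal (\<bar>X k r \<omega>\<bar> * indicator {\<omega>. \<bar>X k r \<omega>\<bar> > A} \<omega>) \<partial>M"]
          True mpos[OF True] by (simp add: Z_def)
      also have "\<dots> < ennreal c" using A0[of A] by (simp add: A_def)
      finally show ?thesis
        by (subst (asm) ennreal_less_iff) (auto intro: integral_nonneg_AE)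
    qed
    define \<delta> where "\<delta> = \<epsilon> * sqrt \<eta> / 8"
    have d: "\<delta> > 0" using eps eta by (simp add: \<delta>_def)
    have d2: "\<delta>^2 = \<epsilon>^2 * \<eta> / 64"
      using eta by (simp add: \<delta>_def power_mult_distrib power_divide)
    define \<eta>' where "\<eta>' = \<eta> * \<epsilon>^2 / (64 * A^2)"
    have eta': "\<eta>' > 0" using eta eps A by (simp add: \<eta>'_def)
    have "\<forall>\<^sub>F r in at_top. (SUP k\<in>{1..}. measure M {\<omega> \<in> space M. \<bar>X k r \<omega>\<bar> > \<delta>}) < \<eta>'"
      using order_tendstoD(2)[OF W1[OF d] eta'] .
    then obtain R0 where R0: "\<And>r. r \<ge> R0 \<Longrightarrow>
        (SUP k\<in>{1..}. measure M {\<omega> \<in> space M. \<bar>X k r \<omega>\<bar> > \<delta>}) < \<eta>'"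
      unfolding eventually_at_top_linorder by blast
    define R where "R = max R0 1"
    have R: "R > 0" by (simp add: R_def)
    have probR: "prob {\<omega> \<in> space M. \<delta> < \<bar>Z k \<omega>\<bar>} < \<eta>'" if "1 \<le> k" "m k \<ge> R" for k
    proof -
      have "prob {\<omega> \<in> space M. \<delta> < \<bar>Z k \<omega>\<bar>} = measure M {\<omega> \<in> space M. \<bar>X k (m k) \<omega>\<bar> > \<delta>}"
        using that by (simp add: Z_def)
      also have "\<dots> \<le> (SUP j\<in>{1..}. measure M {\<omega> \<in> space M. \<bar>X j (m k) \<omega>\<bar> > \<delta>})"
        by (rule cSUP_upper[where f="\<lambda>j. measure M {\<omega> \<in> space M. \<bar>X j (m k) \<omega>\<bar> > \<delta>}"]) (use that in \<open>auto intro!: bdd_aboveI[where M=1]\<close>)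
      also have "\<dots> < \<eta>'" using R0[of "m k"] that by (simp add: R_def)
      finally show ?thesis .
    qed
    define B where "B k \<omega> = (if A < \<bar>Z k \<omega>\<bar> then 0 else Z k \<omega>)" for k \<omega>
    define T where "T k \<omega> = B k \<omega> - expectation (B k)" for k \<omega>
    define V where "V k \<omega> = Z k \<omega> - B k \<omega> + expectation (B k)" for k \<omega>
    have Bm[measurable]: "B k \<in> borel_measurable M" for k unfolding B_def by measurable
    have Tm[measurable]: "T k \<in> borel_measurable M" for k unfolding T_def by measurable
    have Vm[measurable]: "V k \<in> borel_measurable M" for k unfolding V_def by measurable
    have bndB: "\<bar>B k \<omega>\<bar> \<le> A" for k \<omega> using A by (simp add: B_def)
    have intB: "integrable M (B k)" for k
      by (rule integrable_const_bound[where B=A]) (use bndB in auto)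
    have EB: "\<bar>expectation (B k)\<bar> \<le> A" for k
    proof -
      have "\<bar>expectation (B k)\<bar> \<le> expectation (\<lambda>\<omega>. \<bar>B k \<omega>\<bar>)" by (rule integral_abs_bound)
      also have "\<dots> \<le> A" by (rule integral_le_const) (use intB bndB in auto)
      finally show ?thesis .
    qed
    have bndT: "\<bar>T k \<omega>\<bar> \<le> 2 * A" for k \<omega>
      using bndB[of k \<omega>] EB[of k] by (simp add: T_def)
    have ET: "expectation (T k) = 0" for k
      using intB[of k] by (simp add: T_def[abs_def] prob_space)
    have intV: "integrable M (V k)" for k
      using Zi[of k] intB[of k] by (simp add: V_def[abs_def])
    have varT: "expectation (\<lambda>\<omega>. (T k \<omega>)^2) \<le> \<delta>^2 + A^2 * prob {\<omega>\<in>space M. \<delta> < \<bar>Z k \<omega>\<bar>}" for k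
      using trunc_var_bound[OF Zm A d, of k] by (simp add: T_def B_def[abs_def])
    have tailV: "integrable M (\<lambda>\<omega>. \<bar>V k \<omega>\<bar>)" "expectation (\<lambda>\<omega>. \<bar>V k \<omega>\<bar>) \<le> 2 * c" for k
    proof -
      show "integrable M (\<lambda>\<omega>. \<bar>V k \<omega>\<bar>)" using intV[of k] by auto
      have "expectation (\<lambda>\<omega>. \<bar>V k \<omega>\<bar>) \<le> 2 * expectation (\<lambda>\<omega>. \<bar>Z k \<omega>\<bar> * indicator {\<omega>. A < \<bar>Z k \<omega>\<bar>} \<omega>)"
        using trunc_tail_bound(3)[OF Zi EZ, of k A] by (simp add: V_def B_def[abs_def])
      then show "expectation (\<lambda>\<omega>. \<bar>V k \<omega>\<bar>) \<le> 2 * c" using tailA[of k] by linarith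
    qed
    have indT: "indep_vars (\<lambda>_. borel) T {1..}"
    proof -
      have "indep_vars (\<lambda>_. borel)
          (\<lambda>k \<omega>. (\<lambda>f. (if A < \<bar>f (m k)\<bar> then 0 else f (m k)) - expectation (B k)) ((\<lambda>r\<in>{0<..}. X k r \<omega>))) {1..}"
      proof (rule indep_vars_compose2[OF indep])
        fix k :: nat assume k: "k \<in> {1..}"
        then have mk: "m k \<in> {0<..}" using mpos by auto
        show "(\<lambda>f. (if A < \<bar>f (m k)\<bar> then 0 else f (m k)) - expectation (B k))
            \<in> borel_measurable (PiM {0<..} (\<lambda>_. borel))"
          using mk by measurable
      qed
      then show ?thesis
      proof (rule indep_vars_cong[THEN iffD1, rotated 3])
        fix k :: nat assume k: "k \<in> {1..}"
        then have "m k > 0" using mpos by auto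
        then show "(\<lambda>\<omega>. (\<lambda>f. (if A < \<bar>f (m k)\<bar> then 0 else f (m k)) - expectation (B k)) ((\<lambda>r\<in>{0<..}. X k r \<omega>))) = T k"
          using k by (auto simp: T_def B_def Z_def fun_eq_iff)
      qed auto
    qed
    define K where "K = 16 * A^2 * R / (\<epsilon>^2 * \<eta>) + 1"
    have "\<forall>\<^sub>F n in sequentially. K < Mn n"
      using mdiv unfolding filterlim_at_top_dense Mn_def by blast
    then show ?thesis
    proof (rule eventually_mono)
      fix n assume Kn: "K < Mn n"
      have "0 \<le> 16 * A^2 * R / (\<epsilon>^2 * \<eta>)" using A R eps eta by simp
      then have K0: "K > 0" by (simp add: K_def)
      have Mpos: "Mn n > 0" using Kn K0 by linarith
      define w where "w k = m k / Mn n" for k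
      have w0: "w k \<ge> 0" if "k \<in> {1..n}" for k
        using that mpos[of k] Mpos unfolding w_def by (auto intro!: divide_nonneg_pos)
      have mle: "m k \<le> Mn n" if "k \<in> {1..n}" for k
        unfolding Mn_def by (rule member_le_sum) (use that mpos in \<open>auto simp: less_imp_le\<close>)
      have w1: "w k \<le> 1" if "k \<in> {1..n}" for k using mle[OF that] Mpos by (simp add: w_def)
      have sumw: "(\<Sum>k=1..n. w k) = 1"
        using Mpos by (simp add: w_def Mn_def sum_divide_distrib[symmetric])
      define fT where "fT \<omega> = (\<Sum>k=1..n. w k * T k \<omega>)" for \<omega>
      define fV where "fV \<omega> = (\<Sum>k=1..n. w k * V k \<omega>)" for \<omega>
      have fTm[measurable]: "fT \<in> borel_measurable M" unfolding fT_def by measurable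
      have fVm[measurable]: "fV \<in> borel_measurable M" unfolding fV_def by measurable
      have decomp: "(\<Sum>k=1..n. m k / Mn n * Z k \<omega>) = fT \<omega> + fV \<omega>" for \<omega>
        by (simp add: fT_def fV_def w_def T_def V_def sum.distrib[symmetric] algebra_simps)
      let ?S = "{\<omega> \<in> space M. \<bar>\<Sum>k=1..n. m k / Mn n * Z k \<omega>\<bar> > \<epsilon>}"
      let ?ST = "{\<omega> \<in> space M. \<epsilon>/2 \<le> \<bar>fT \<omega>\<bar>}"
      let ?SV = "{\<omega> \<in> space M. fV \<omega> \<ge> \<epsilon>/2} \<union> {\<omega> \<in> space M. - fV \<omega> \<ge> \<epsilon>/2}"
      let ?SV' = "{\<omega> \<in> space M. \<bar>fV \<omega>\<bar> \<ge> \<epsilon>/2}"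
      have "Pn n \<le> prob (?ST \<union> ?SV')"
        unfolding Pn_eq
      proof (rule finite_measure_mono)
        show "?S \<subseteq> ?ST \<union> ?SV'"
        proof
          fix \<omega> assume "\<omega> \<in> ?S"
          then have w: "\<omega> \<in> space M" "\<epsilon> < \<bar>fT \<omega> + fV \<omega>\<bar>" by (auto simp only: decomp)
          have "\<bar>fT \<omega> + fV \<omega>\<bar> \<le> \<bar>fT \<omega>\<bar> + \<bar>fV \<omega>\<bar>" by (rule abs_triangle_ineq)
          then show "\<omega> \<in> ?ST \<union> ?SV'" using w by auto
        qed
      qed auto
      also have "\<dots> \<le> prob ?ST + prob ?SV'"
        by (rule measure_Un_le) auto
      finally have P1: "Pn n \<le> prob ?ST + prob ?SV'" .
      define D where "D = (\<Sum>k=1..n. w k * (2 * A))"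
      have bfT: "\<bar>fT \<omega>\<bar> \<le> D" for \<omega>
      proof -
        have "\<bar>fT \<omega>\<bar> \<le> (\<Sum>k=1..n. \<bar>w k * T k \<omega>\<bar>)" unfolding fT_def by (rule sum_abs)
        also have "\<dots> \<le> D" unfolding D_def
          by (rule sum_mono) (use w0 bndT in \<open>auto simp: abs_mult intro!: mult_left_mono\<close>)
        finally show ?thesis .
      qed
      have intfT2: "integrable M (\<lambda>\<omega>. (fT \<omega>)^2)"
      proof (rule integrable_const_bound[where B="D^2"])
        show "AE x in M. norm ((fT x)^2) \<le> D^2"
        proof (rule AE_I2)
          fix x
          have "\<bar>fT x\<bar>^2 \<le> D^2" by (rule power_mono[OF bfT[of x]]) simp
          then show "norm ((fT x)^2) \<le> D^2" by simp
        qed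
      qed simp
      have "prob ?ST \<le> expectation (\<lambda>\<omega>. (fT \<omega>)^2) / (\<epsilon>/2)^2"
        by (rule second_moment_method) (use intfT2 eps in auto)
      also have "expectation (\<lambda>\<omega>. (fT \<omega>)^2) = (\<Sum>k=1..n. (w k)^2 * expectation (\<lambda>\<omega>. (T k \<omega>)^2))"
        unfolding fT_def
        by (rule sq_sum_indep[where C="2*A"]) (auto intro: indep_vars_subset[OF indT] bndT ET)
      also have "\<dots> \<le> (\<Sum>k=1..n. w k * (\<delta>^2 + A^2 * (\<eta>' + R / Mn n)))"
      proof (rule sum_mono)
        fix k assume k: "k \<in> {1..n}"
        define p where "p = prob {\<omega>\<in>space M. \<delta> < \<bar>Z k \<omega>\<bar>}"
        have p01: "0 \<le> p" "p \<le> 1" by (auto simp: p_def)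
        have wp: "w k * p \<le> \<eta>' + R / Mn n"
        proof (cases "m k \<ge> R")
          case True
          have "p < \<eta>'" using probR[OF _ True] k by (auto simp: p_def)
          moreover have "w k * p \<le> p" using w1[OF k] p01 mult_right_mono[of "w k" 1 p] by simp
          moreover have "0 \<le> R / Mn n" using R Mpos by simp
          ultimately show ?thesis by linarith
        next
          case False
          have "w k \<le> R / Mn n" using False Mpos by (simp add: w_def divide_right_mono)
          moreover have "w k * p \<le> w k" using w0[OF k] p01 by (simp add: mult_left_le)
          ultimately show ?thesis using eta' by linarith
        qed
        have "(w k)^2 * expectation (\<lambda>\<omega>. (T k \<omega>)^2) \<le> (w k)^2 * (\<delta>^2 + A^2 * p)"
          using varT[of k] by (simp add: p_def mult_left_mono)
        also have "\<dots> = w k * (w k * \<delta>^2) + A^2 * (w k * (w k * p))"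
          by (simp add: power2_eq_square algebra_simps)
        also have "\<dots> \<le> w k * (1 * \<delta>^2) + A^2 * (w k * (\<eta>' + R / Mn n))"
          using w0[OF k] w1[OF k] wp
          by (intro add_mono mult_left_mono mult_right_mono) auto
        also have "\<dots> = w k * (\<delta>^2 + A^2 * (\<eta>' + R / Mn n))"
          by (simp add: algebra_simps)
        finally show "(w k)^2 * expectation (\<lambda>\<omega>. (T k \<omega>)^2) \<le> w k * (\<delta>^2 + A^2 * (\<eta>' + R / Mn n))" .
      qed
      also have "\<dots> = \<delta>^2 + A^2 * (\<eta>' + R / Mn n)"
        unfolding sum_distrib_right[symmetric] sumw by simp
      finally have PT: "prob ?ST \<le> (\<delta>^2 + A^2 * (\<eta>' + R / Mn n)) / (\<epsilon>/2)^2"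
        using eps by (simp add: divide_right_mono)
      have intfV: "integrable M (\<lambda>\<omega>. \<bar>fV \<omega>\<bar>)" unfolding fV_def using intV by auto
      have "prob ?SV' \<le> expectation (\<lambda>\<omega>. \<bar>fV \<omega>\<bar>) / (\<epsilon>/2)"
        by (rule integral_Markov_inequality_measure[where A="space M"]) (use intfV eps in auto)
      also have "expectation (\<lambda>\<omega>. \<bar>fV \<omega>\<bar>) \<le> expectation (\<lambda>\<omega>. \<Sum>k=1..n. w k * \<bar>V k \<omega>\<bar>)"
      proof (rule integral_mono[OF intfV])
        show "integrable M (\<lambda>\<omega>. \<Sum>k=1..n. w k * \<bar>V k \<omega>\<bar>)" using tailV(1) by auto
        fix \<omega> show "\<bar>fV \<omega>\<bar> \<le> (\<Sum>k=1..n. w k * \<bar>V k \<omega>\<bar>)"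
          unfolding fV_def using w0
          by (intro order.trans[OF sum_abs] sum_mono) (auto simp: abs_mult)
      qed
      also have "\<dots> = (\<Sum>k=1..n. w k * expectation (\<lambda>\<omega>. \<bar>V k \<omega>\<bar>))"
        using tailV(1) by (simp add: integral_sum)
      also have "\<dots> \<le> (\<Sum>k=1..n. w k * (2 * c))"
        by (rule sum_mono) (use w0 tailV(2) in \<open>auto intro: mult_left_mono\<close>)
      also have "\<dots> = 2 * c"
        unfolding sum_distrib_right[symmetric] sumw by simp
      finally have PV: "prob ?SV' \<le> 2 * c / (\<epsilon>/2)"
        using eps by (simp add: divide_right_mono)
      have e1: "(\<delta>^2 + A^2 * \<eta>') / (\<epsilon>/2)^2 = \<eta> / 8"
      proof -
        have "A^2 * \<eta>' = \<eta> * \<epsilon>^2 / 64" using A by (simp add: \<eta>'_def)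
        then show ?thesis unfolding d2 using eps by (simp add: field_simps power2_eq_square)
      qed
      have e2: "2 * c / (\<epsilon>/2) = \<eta> / 4"
        using eps by (simp add: c_def field_simps)
      have e3: "A^2 * (R / Mn n) / (\<epsilon>/2)^2 < \<eta> / 4"
      proof -
        have "16 * A^2 * R / (\<epsilon>^2 * \<eta>) < Mn n" using Kn by (simp add: K_def)
        then have "16 * A^2 * R < Mn n * (\<epsilon>^2 * \<eta>)"
          using eps eta by (simp add: divide_less_eq)
        then show ?thesis using eps eta Mpos by (simp add: field_simps power2_eq_square)
      qed
      have "(\<delta>^2 + A^2 * (\<eta>' + R / Mn n)) / (\<epsilon>/2)^2
          = (\<delta>^2 + A^2 * \<eta>') / (\<epsilon>/2)^2 + A^2 * (R / Mn n) / (\<epsilon>/2)^2"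
        by (simp add: algebra_simps add_divide_distrib)
      then show "Pn n < \<eta>" using P1 PT PV e1 e2 e3 eta by linarith
    qed
  qed
  then show "((\<lambda>n. measure M {\<omega> \<in> space M.
        \<bar>\<Sum>k=1..n. m k / (\<Sum>j=1..n. m j) * X k (m k) \<omega>\<bar> > \<epsilon>}) \<longlongrightarrow> 0) sequentially"
    unfolding Pn_def[symmetric]
    by (intro order_tendstoI) (auto simp: Pn_def intro!: always_eventually less_le_trans[OF _ measure_nonneg])
qed

end
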